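(* Let $\mathbb{K}$ be an algebraically closed field of characteristic zero and let $X$ be an irreducible affine variety with $X\cong Y\times\mathbb{A}^1$, where $Y$ is an affine variety admitting a nonzero locally nilpotent derivation of $\mathbb{K}[Y]$. Suppose that $\mathrm{HD}^*(X)\neq\mathbb{K}[X]$. Then $\mathrm{HD}^*(X)$ is not a finitely generated $\mathbb{K}$-algebra.
   Context: A derivation $\partial$ of $\mathbb{K}[X]$ is locally nilpotent (LND) if for every $a\in\mathbb{K}[X]$ there is $n$ with $\partial^n(a)=0$. An element $s\in\mathbb{K}[X]$ is a slice of an LND $\partial$ if $\partial(s)=1$. Let $\mathrm{LND}^*(X)$ be the set of LNDs of $\mathbb{K}[X]$ admitting a slice. The modified Derksen invariant $\mathrm{HD}^*(X)$ is the $\mathbb{K}$-subalgebra of $\mathbb{K}[X]$ generated by the kernels $\ker\partial$ for all $\partial\in\mathrm{LND}^*(X)$. *)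

theory Defs
  imports "HOL-Computational_Algebra.Polynomial"
begin

definition alg_closed_field :: "'k::field itself \<Rightarrow> bool" where
  "alg_closed_field _ \<longleftrightarrow> (\<forall>p::'k poly. degree p > 0 \<longrightarrow> (\<exists>x. poly p x = 0))"

text \<open>A K-algebra structure on a commutative ring 'r is given by a ring homomorphism
  iota from the field 'k into 'r.\<close>
definition ring_hom_map :: "('k::field \<Rightarrow> 'r::comm_ring_1) \<Rightarrow> bool" where
  "ring_hom_map \<iota> \<longleftrightarrow> \<iota> 1 = 1 \<and> (\<forall>a b. \<iota> (a + b) = \<iota> a + \<iota> b) \<and> (\<forall>a b. \<iota> (a * b) = \<iota> a * \<iota> b)"

inductive_set alg_gen :: "('k \<Rightarrow> 'r::comm_ring_1) \<Rightarrow> 'r set \<Rightarrow> 'r set"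
  for \<iota> :: "'k \<Rightarrow> 'r" and S :: "'r set" where
  gen_base: "x \<in> S \<Longrightarrow> x \<in> alg_gen \<iota> S"
| gen_const: "\<iota> c \<in> alg_gen \<iota> S"
| gen_add: "x \<in> alg_gen \<iota> S \<Longrightarrow> y \<in> alg_gen \<iota> S \<Longrightarrow> x + y \<in> alg_gen \<iota> S"
| gen_uminus: "x \<in> alg_gen \<iota> S \<Longrightarrow> - x \<in> alg_gen \<iota> S"
| gen_mult: "x \<in> alg_gen \<iota> S \<Longrightarrow> y \<in> alg_gen \<iota> S \<Longrightarrow> x * y \<in> alg_gen \<iota> S"

definition fg_algebra :: "('k \<Rightarrow> 'r::comm_ring_1) \<Rightarrow> 'r set \<Rightarrow> bool" where
  "fg_algebra \<iota> A \<longleftrightarrow> (\<exists>G. finite G \<and> alg_gen \<iota> G = A)"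

definition is_derivation :: "('k \<Rightarrow> 'r::comm_ring_1) \<Rightarrow> ('r \<Rightarrow> 'r) \<Rightarrow> bool" where
  "is_derivation \<iota> D \<longleftrightarrow> (\<forall>a b. D (a + b) = D a + D b) \<and> (\<forall>a b. D (a * b) = a * D b + b * D a)
     \<and> (\<forall>c. D (\<iota> c) = 0)"

definition is_LND :: "('k \<Rightarrow> 'r::comm_ring_1) \<Rightarrow> ('r \<Rightarrow> 'r) \<Rightarrow> bool" where
  "is_LND \<iota> D \<longleftrightarrow> is_derivation \<iota> D \<and> (\<forall>a. \<exists>n. (D ^^ n) a = 0)"

definition LND_star :: "('k \<Rightarrow> 'r::comm_ring_1) \<Rightarrow> ('r \<Rightarrow> 'r) set" where
  "LND_star \<iota> = {D. is_LND \<iota> D \<and> (\<exists>s. D s = 1)}"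

definition HD_star :: "('k \<Rightarrow> 'r::comm_ring_1) \<Rightarrow> 'r set" where
  "HD_star \<iota> = alg_gen \<iota> (\<Union>D\<in>LND_star \<iota>. {a. D a = 0})"

end

theory Submission
  imports Defs
begin


definition subr :: "'a::comm_ring_1 set \<Rightarrow> bool" where
  "subr S \<longleftrightarrow> 0 \<in> S \<and> 1 \<in> S \<and> (\<forall>a\<in>S. \<forall>b\<in>S. a + b \<in> S \<and> a * b \<in> S) \<and> (\<forall>a\<in>S. - a \<in> S)"

definition idl :: "'a::comm_ring_1 set \<Rightarrow> 'a set \<Rightarrow> bool" where
  "idl S I \<longleftrightarrow> I \<subseteq> S \<and> 0 \<in> I \<and> (\<forall>a\<in>I. \<forall>b\<in>I. a + b \<in> I) \<and> (\<forall>s\<in>S. \<forall>a\<in>I. s * a \<in> I)"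

definition lcomb :: "'a::comm_ring_1 set \<Rightarrow> 'a set \<Rightarrow> 'a set" where
  "lcomb S F = {(\<Sum>f\<in>F. c f * f) | c. \<forall>f\<in>F. c f \<in> S}"

definition noeth :: "'a::comm_ring_1 set \<Rightarrow> bool" where
  "noeth S \<longleftrightarrow> (\<forall>I. idl S I \<longrightarrow> (\<exists>F. finite F \<and> F \<subseteq> I \<and> I = lcomb S F))"

lemma subrD:
  assumes "subr S"
  shows "0 \<in> S" "1 \<in> S" "a \<in> S \<Longrightarrow> b \<in> S \<Longrightarrow> a + b \<in> S" "a \<in> S \<Longrightarrow> b \<in> S \<Longrightarrow> a * b \<in> S"
    "a \<in> S \<Longrightarrow> - a \<in> S"
  using assms unfolding subr_def by auto

lemma subr_diff: "subr S \<Longrightarrow> a \<in> S \<Longrightarrow> b \<in> S \<Longrightarrow> a - b \<in> S"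
  using subrD[of S] by (metis diff_conv_add_uminus)

lemma subr_sum: "subr S \<Longrightarrow> (\<And>x. x \<in> A \<Longrightarrow> g x \<in> S) \<Longrightarrow> sum g A \<in> S"
proof (induction A rule: infinite_finite_induct)
  case (infinite A) then show ?case using subrD by simp
next
  case empty then show ?case using subrD by simp
next
  case (insert x F) then show ?case using subrD(3)[OF insert.prems(1)] by simp
qed

lemma idlD:
  assumes "idl S I"
  shows "I \<subseteq> S" "0 \<in> I" "a \<in> I \<Longrightarrow> b \<in> I \<Longrightarrow> a + b \<in> I" "s \<in> S \<Longrightarrow> a \<in> I \<Longrightarrow> s * a \<in> I"
  using assms unfolding idl_def by auto

lemma idl_uminus: "subr S \<Longrightarrow> idl S I \<Longrightarrow> a \<in> I \<Longrightarrow> - a \<in> I"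
  using idlD(4)[of S I "-1" a] subrD(2,5)[of S] by simp

lemma idl_diff: "subr S \<Longrightarrow> idl S I \<Longrightarrow> a \<in> I \<Longrightarrow> b \<in> I \<Longrightarrow> a - b \<in> I"
  using idl_uminus idlD(3) by (metis diff_conv_add_uminus)

lemma idl_sum: "idl S I \<Longrightarrow> (\<And>x. x \<in> A \<Longrightarrow> g x \<in> I) \<Longrightarrow> sum g A \<in> I"
proof (induction A rule: infinite_finite_induct)
  case (infinite A) then show ?case using idlD by simp
next
  case empty then show ?case using idlD by simp
next
  case (insert x F) then show ?case using idlD(3)[OF insert.prems(1)] by simp
qed

lemma lcomb_idl:
  assumes S: "subr S" and F: "F \<subseteq> S"
  shows "idl S (lcomb S F)"
  unfolding idl_def
proof (intro conjI ballI subsetI)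
  fix a assume "a \<in> lcomb S F"
  then obtain c where a: "a = (\<Sum>f\<in>F. c f * f)" and c: "\<forall>f\<in>F. c f \<in> S"
    unfolding lcomb_def by auto
  show "a \<in> S" unfolding a
  proof (rule subr_sum[OF S])
    fix f assume "f \<in> F" then show "c f * f \<in> S" using c F subrD(4)[OF S] by blast
  qed
next
  show "0 \<in> lcomb S F" unfolding lcomb_def
    by (rule CollectI, rule exI[of _ "\<lambda>_. 0"]) (simp add: subrD[OF S])
next
  fix a b assume "a \<in> lcomb S F" "b \<in> lcomb S F"
  then obtain c d where a: "a = (\<Sum>f\<in>F. c f * f)" and c: "\<forall>f\<in>F. c f \<in> S"
    and b: "b = (\<Sum>f\<in>F. d f * f)" and d: "\<forall>f\<in>F. d f \<in> S"
    unfolding lcomb_def by auto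
  have "a + b = (\<Sum>f\<in>F. (c f + d f) * f)" unfolding a b
    by (simp add: sum.distrib distrib_right)
  moreover have "\<forall>f\<in>F. c f + d f \<in> S" using c d subrD(3)[OF S] by blast
  ultimately show "a + b \<in> lcomb S F" unfolding lcomb_def
    by (intro CollectI exI[of _ "\<lambda>f. c f + d f"]) simp
next
  fix s a assume s: "s \<in> S" and "a \<in> lcomb S F"
  then obtain c where a: "a = (\<Sum>f\<in>F. c f * f)" and c: "\<forall>f\<in>F. c f \<in> S"
    unfolding lcomb_def by auto
  have "s * a = (\<Sum>f\<in>F. (s * c f) * f)" unfolding a
    by (simp add: sum_distrib_left mult.assoc)
  moreover have "\<forall>f\<in>F. s * c f \<in> S" using c s subrD(4)[OF S] by blast
  ultimately show "s * a \<in> lcomb S F" unfolding lcomb_def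
    by (intro CollectI exI[of _ "\<lambda>f. s * c f"]) simp
qed

lemma lcomb_min:
  assumes "idl S I" "F \<subseteq> I"
  shows "lcomb S F \<subseteq> I"
proof
  fix a assume "a \<in> lcomb S F"
  then obtain c where a: "a = (\<Sum>f\<in>F. c f * f)" and c: "\<forall>f\<in>F. c f \<in> S"
    unfolding lcomb_def by auto
  show "a \<in> I" unfolding a
  proof (rule idl_sum[OF assms(1)])
    fix f assume "f \<in> F" then show "c f * f \<in> I" using c assms(2) idlD(4)[OF assms(1)] by blast
  qed
qed

lemma lcomb_gen:
  assumes S: "subr S" and "finite F" "f \<in> F"
  shows "f \<in> lcomb S F"
proof -
  have "(\<Sum>g\<in>F. (if g = f then 1 else 0) * g) = (\<Sum>g\<in>F. if g = f then g else 0)"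
    by (rule sum.cong) auto
  also have "\<dots> = f" using assms(2,3) by (simp add: sum.delta)
  finally have "(\<Sum>g\<in>F. (if g = f then 1 else 0) * g) = f" .
  moreover have "\<forall>g\<in>F. (if g = f then 1 else 0) \<in> S" using subrD(1,2)[OF S] by auto
  ultimately show ?thesis unfolding lcomb_def
    by (intro CollectI exI[of _ "\<lambda>g. if g = f then 1 else 0"]) simp
qed

lemma lcomb_sub: "subr S \<Longrightarrow> finite F \<Longrightarrow> F \<subseteq> lcomb S F"
  using lcomb_gen by blast

lemma idl_chain_Union:
  fixes J :: "nat \<Rightarrow> 'a::comm_ring_1 set"
  assumes J: "\<And>n. idl S (J n)" and mono: "\<And>m n. m \<le> n \<Longrightarrow> J m \<subseteq> J n"
  shows "idl S (\<Union>n. J n)"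
  unfolding idl_def
proof (intro conjI ballI)
  show "(\<Union>n. J n) \<subseteq> S"
  proof
    fix a assume "a \<in> (\<Union>n. J n)"
    then obtain n where "a \<in> J n" by blast
    then show "a \<in> S" using idlD(1)[OF J[of n]] by blast
  qed
  show "0 \<in> (\<Union>n. J n)" using idlD(2)[OF J[of 0]] by blast
next
  fix a b assume "a \<in> (\<Union>n. J n)" "b \<in> (\<Union>n. J n)"
  then obtain m n where "a \<in> J m" "b \<in> J n" by auto
  then have "a \<in> J (max m n)" "b \<in> J (max m n)"
    using mono[of m "max m n"] mono[of n "max m n"] by auto
  then have "a + b \<in> J (max m n)" using idlD(3)[OF J[of "max m n"]] by blast
  then show "a + b \<in> (\<Union>n. J n)" by blast
next
  fix s a assume s: "s \<in> S" and "a \<in> (\<Union>n. J n)"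
  then obtain n where "a \<in> J n" by blast
  then have "s * a \<in> J n" using idlD(4)[OF J[of n] s] by blast
  then show "s * a \<in> (\<Union>n. J n)" by blast
qed

lemma noeth_chain:
  fixes J :: "nat \<Rightarrow> 'a::comm_ring_1 set"
  assumes N: "noeth S" and J: "\<And>n. idl S (J n)" and mono: "\<And>m n. m \<le> n \<Longrightarrow> J m \<subseteq> J n"
  shows "\<exists>N. (\<Union>n. J n) \<subseteq> J N"
proof -
  have U: "idl S (\<Union>n. J n)" using idl_chain_Union[of S J] J mono by blast
  then obtain F where F: "finite F" "F \<subseteq> (\<Union>n. J n)" "(\<Union>n. J n) = lcomb S F"
    using N[unfolded noeth_def, rule_format, OF U] by blast
  have "\<forall>f\<in>F. \<exists>n. f \<in> J n" using F(2) by blast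
  then obtain nf where nf: "\<forall>f\<in>F. f \<in> J (nf f)" using bchoice[of F "\<lambda>f n. f \<in> J n"] by blast
  define N where "N = Max (nf ` F)"
  have "F \<subseteq> J N"
  proof
    fix f assume f: "f \<in> F"
    then have "nf f \<le> N" unfolding N_def using F(1) by simp
    then have "J (nf f) \<subseteq> J N" by (rule mono)
    then show "f \<in> J N" using nf f by blast
  qed
  then have "lcomb S F \<subseteq> J N" using lcomb_min[OF J[of N]] by blast
  then have "(\<Union>n. J n) \<subseteq> J N" using F(3) by simp
  then show ?thesis by blast
qed



definition PS :: "'a::comm_ring_1 set \<Rightarrow> 'a poly set" where
  "PS S = {p. \<forall>i. coeff p i \<in> S}"

lemma subr_PS: assumes S: "subr S" shows "subr (PS S)"
proof -
  have 0: "0 \<in> PS S" unfolding PS_def using subrD(1)[OF S] by simp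
  have 1: "1 \<in> PS S" unfolding PS_def using subrD(1,2)[OF S] by (simp add: coeff_1)
  have add: "a + b \<in> PS S" if a: "a \<in> PS S" and b: "b \<in> PS S" for a b
    using a b subrD(3)[OF S] unfolding PS_def by simp
  have mult: "a * b \<in> PS S" if a: "a \<in> PS S" and b: "b \<in> PS S" for a b
    unfolding PS_def
  proof (intro CollectI allI)
    fix i show "coeff (a * b) i \<in> S" unfolding coeff_mult
      by (rule subr_sum[OF S]) (use a b subrD(4)[OF S] in \<open>auto simp: PS_def\<close>)
  qed
  have neg: "- a \<in> PS S" if a: "a \<in> PS S" for a
    using a subrD(5)[OF S] unfolding PS_def by simp
  show ?thesis unfolding subr_def using 0 1 add mult neg by blast
qed

lemma PS_monom: "subr S \<Longrightarrow> s \<in> S \<Longrightarrow> monom s k \<in> PS S"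
  unfolding PS_def using subrD(1) by auto

lemma PS_const: "subr S \<Longrightarrow> s \<in> S \<Longrightarrow> [:s:] \<in> PS S"
  using PS_monom[of S s 0] by (simp add: monom_0)

theorem noeth_PS:
  assumes S: "subr S" and N: "noeth S"
  shows "noeth (PS S)"
  unfolding noeth_def
proof (intro allI impI)
  fix P assume P: "idl (PS S) P"
  have PS: "subr (PS S)" by (rule subr_PS[OF S])
  define LC where "LC d = {coeff p d | p. p \<in> P \<and> degree p \<le> d}" for d
  have LCi: "idl S (LC d)" for d
    unfolding idl_def
  proof (intro conjI ballI subsetI)
    fix a assume "a \<in> LC d"
    then obtain p where "p \<in> P" "a = coeff p d" unfolding LC_def by blast
    then show "a \<in> S" using idlD(1)[OF P] unfolding PS_def by blast
  next
    have "(0::'a poly) \<in> P" by (rule idlD(2)[OF P])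
    then show "0 \<in> LC d" unfolding LC_def by (intro CollectI exI[of _ 0]) simp
  next
    fix a b assume "a \<in> LC d" "b \<in> LC d"
    then obtain p q where pq: "p \<in> P" "a = coeff p d" "degree p \<le> d" "q \<in> P" "b = coeff q d" "degree q \<le> d"
      unfolding LC_def by blast
    have "p + q \<in> P" using idlD(3)[OF P] pq by blast
    moreover have "degree (p + q) \<le> d" using pq degree_add_le by blast
    ultimately show "a + b \<in> LC d" unfolding LC_def using pq
      by (intro CollectI exI[of _ "p + q"]) simp
  next
    fix s a assume s: "s \<in> S" and "a \<in> LC d"
    then obtain p where p: "p \<in> P" "a = coeff p d" "degree p \<le> d"
      unfolding LC_def by blast
    have "[:s:] * p \<in> P" using idlD(4)[OF P PS_const[OF S s] p(1)] .
    moreover have "degree ([:s:] * p) \<le> d" using p(3) degree_smult_le[of s p] by simp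
    ultimately show "s * a \<in> LC d" unfolding LC_def using p
      by (intro CollectI exI[of _ "[:s:] * p"]) simp
  qed
  have LCSuc: "LC d \<subseteq> LC (Suc d)" for d
  proof
    fix a assume "a \<in> LC d"
    then obtain p where p: "p \<in> P" "a = coeff p d" "degree p \<le> d"
      unfolding LC_def by blast
    have mp: "monom 1 1 * p = pCons 0 p"
      by (rule poly_eqI) (simp add: coeff_monom_mult coeff_pCons split: nat.split)
    have "monom 1 1 * p \<in> P" using idlD(4)[OF P PS_monom[OF S subrD(2)[OF S]] p(1)] .
    moreover have "degree (monom 1 1 * p) \<le> Suc d"
      unfolding mp using p(3) degree_pCons_le[of 0 p] by linarith
    moreover have "coeff (monom 1 1 * p) (Suc d) = a" using p(2) by (simp add: coeff_monom_mult)
    ultimately show "a \<in> LC (Suc d)" unfolding LC_def by blast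
  qed
  have LCmono: "m \<le> n \<Longrightarrow> LC m \<subseteq> LC n" for m n
    using lift_Suc_mono_le[of LC, OF LCSuc] by blast
  have "\<exists>N. (\<Union>n. LC n) \<subseteq> LC N"
    by (rule noeth_chain[of S LC, OF N LCi LCmono])
  then obtain D where D: "(\<Union>n. LC n) \<subseteq> LC D" by (elim exE)
  have LCmin: "LC m \<subseteq> LC (min m D)" for m
  proof (cases "m \<le> D")
    case True then show ?thesis by simp
  next
    case False
    then have md: "min m D = D" by simp
    have "LC m \<subseteq> (\<Union>n. LC n)" by (rule UN_upper) simp
    then show ?thesis unfolding md using D by (rule order_trans)
  qed
  have "\<forall>d. \<exists>E. finite E \<and> E \<subseteq> LC d \<and> LC d = lcomb S E"
    using N[unfolded noeth_def, rule_format, OF LCi] by blast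
  then obtain E where "\<forall>d. finite (E d) \<and> E d \<subseteq> LC d \<and> LC d = lcomb S (E d)"
    using choice[of "\<lambda>d E. finite E \<and> E \<subseteq> LC d \<and> LC d = lcomb S E"] by blast
  then have E: "\<And>d. finite (E d)" "\<And>d. E d \<subseteq> LC d" "\<And>d. LC d = lcomb S (E d)"
    by auto
  have "\<forall>de. \<exists>p. snd de \<in> LC (fst de) \<longrightarrow> p \<in> P \<and> degree p \<le> fst de \<and> coeff p (fst de) = snd de"
  proof
    fix de :: "nat \<times> 'a"
    show "\<exists>p. snd de \<in> LC (fst de) \<longrightarrow> p \<in> P \<and> degree p \<le> fst de \<and> coeff p (fst de) = snd de"
    proof (cases "snd de \<in> LC (fst de)")
      case True
      then obtain p where "p \<in> P" "degree p \<le> fst de" "snd de = coeff p (fst de)"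
        unfolding LC_def by blast
      then show ?thesis by (intro exI[of _ p]) simp
    next
      case False then show ?thesis by simp
    qed
  qed
  then obtain pe0 where pe0: "\<forall>de. snd de \<in> LC (fst de) \<longrightarrow> pe0 de \<in> P \<and> degree (pe0 de) \<le> fst de \<and> coeff (pe0 de) (fst de) = snd de"
    using choice[of "\<lambda>de p. snd de \<in> LC (fst de) \<longrightarrow> p \<in> P \<and> degree p \<le> fst de \<and> coeff p (fst de) = snd de"] by blast
  define pe where "pe d e = pe0 (d, e)" for d e
  have pe: "\<And>d e. e \<in> LC d \<Longrightarrow> pe d e \<in> P \<and> degree (pe d e) \<le> d \<and> coeff (pe d e) d = e"
  proof -
    fix d e assume "e \<in> LC d"
    then show "pe d e \<in> P \<and> degree (pe d e) \<le> d \<and> coeff (pe d e) d = e"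
      unfolding pe_def using pe0[rule_format, of "(d, e)"] by simp
  qed
  define FP where "FP = (\<Union>d\<in>{..D}. pe d ` E d)"
  have FPfin: "finite FP" unfolding FP_def using E(1) by simp
  have FPP: "FP \<subseteq> P" unfolding FP_def using pe E(2) by blast
  have FPS: "FP \<subseteq> PS S" using FPP idlD(1)[OF P] by blast
  have LI: "idl (PS S) (lcomb (PS S) FP)" by (rule lcomb_idl[OF PS FPS])
  have FPL: "FP \<subseteq> lcomb (PS S) FP" by (rule lcomb_sub[OF PS FPfin])
  have claim: "\<forall>p. p \<in> P \<longrightarrow> degree p \<le> m \<longrightarrow> p \<in> lcomb (PS S) FP" for m
  proof (induction m rule: less_induct)
    case (less m)
    show ?case
    proof (intro allI impI)
      fix p assume p: "p \<in> P" "degree p \<le> m"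
      define d where "d = min m D"
      have dm: "d \<le> m" "d \<le> D" unfolding d_def by auto
      have "coeff p m \<in> LC m" unfolding LC_def using p by blast
      then have "coeff p m \<in> lcomb S (E d)" using LCmin E(3) unfolding d_def by blast
      then obtain s where s: "coeff p m = (\<Sum>e\<in>E d. s e * e)" "\<forall>e\<in>E d. s e \<in> S"
        unfolding lcomb_def by blast
      define r where "r = (\<Sum>e\<in>E d. monom (s e) (m - d) * pe d e)"
      have ped: "e \<in> E d \<Longrightarrow> pe d e \<in> P \<and> degree (pe d e) \<le> d \<and> coeff (pe d e) d = e" for e
        using pe E(2) by blast
      have peFP: "e \<in> E d \<Longrightarrow> pe d e \<in> FP" for e unfolding FP_def using dm by blast
      have rL: "r \<in> lcomb (PS S) FP" unfolding r_def
      proof (rule idl_sum[OF LI])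
        fix e assume e: "e \<in> E d"
        show "monom (s e) (m - d) * pe d e \<in> lcomb (PS S) FP"
          using idlD(4)[OF LI PS_monom[OF S] ] s(2) e peFP FPL by blast
      qed
      have rP: "r \<in> P" unfolding r_def
      proof (rule idl_sum[OF P])
        fix e assume e: "e \<in> E d"
        show "monom (s e) (m - d) * pe d e \<in> P"
          using idlD(4)[OF P PS_monom[OF S] ] s(2) e ped by blast
      qed
      have rc: "coeff r i = (\<Sum>e\<in>E d. (if i < m - d then 0 else s e * coeff (pe d e) (i - (m - d))))" for i
        unfolding r_def by (simp add: coeff_sum coeff_monom_mult)
      have rm: "coeff r m = coeff p m"
        unfolding rc s(1) using dm ped by (intro sum.cong) auto
      have rgt: "coeff r i = 0" if "i > m" for i
        unfolding rc
      proof (intro sum.neutral ballI)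
        fix e assume "e \<in> E d"
        then have "degree (pe d e) \<le> d" using ped by blast
        moreover have "i - (m - d) > d" using that dm by linarith
        ultimately show "(if i < m - d then 0 else s e * coeff (pe d e) (i - (m - d))) = 0"
          by (simp add: coeff_eq_0)
      qed
      define q where "q = p - r"
      have qP: "q \<in> P" unfolding q_def by (rule idl_diff[OF PS P p(1) rP])
      have qc: "coeff q i = 0" if "i \<ge> m" for i
      proof (cases "i = m")
        case True then show ?thesis unfolding q_def using rm by simp
      next
        case False
        then have "i > m" using that by simp
        then show ?thesis unfolding q_def using rgt p(2) by (simp add: coeff_eq_0)
      qed
      have qL: "q \<in> lcomb (PS S) FP"
      proof (cases m)
        case 0
        then have "q = 0" using qc by (intro poly_eqI) simp
        then show ?thesis using idlD(2)[OF LI] by simp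
      next
        case (Suc m')
        have "degree q \<le> m'" using qc Suc by (intro degree_le) simp
        then show ?thesis using less.IH[of m'] Suc qP by simp
      qed
      have "p = q + r" unfolding q_def by simp
      then show "p \<in> lcomb (PS S) FP" using idlD(3)[OF LI qL rL] by simp
    qed
  qed
  have "P = lcomb (PS S) FP"
  proof
    show "P \<subseteq> lcomb (PS S) FP" using claim by blast
    show "lcomb (PS S) FP \<subseteq> P" by (rule lcomb_min[OF P FPP])
  qed
  then show "\<exists>F. finite F \<and> F \<subseteq> P \<and> P = lcomb (PS S) F" using FPfin FPP by blast
qed



definition adjoin :: "'a::comm_ring_1 set \<Rightarrow> 'a \<Rightarrow> 'a set" where
  "adjoin S a = (\<lambda>p. poly p a) ` PS S"

lemma subr_adjoin: assumes S: "subr S" shows "subr (adjoin S a)"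
proof -
  have P: "subr (PS S)" by (rule subr_PS[OF S])
  show ?thesis unfolding subr_def adjoin_def
  proof (intro conjI ballI)
    show "0 \<in> (\<lambda>p. poly p a) ` PS S" using subrD(1)[OF P] by (intro image_eqI[of _ _ 0]) auto
    show "1 \<in> (\<lambda>p. poly p a) ` PS S" using subrD(2)[OF P] by (intro image_eqI[of _ _ 1]) auto
  next
    fix x y assume "x \<in> (\<lambda>p. poly p a) ` PS S" "y \<in> (\<lambda>p. poly p a) ` PS S"
    then obtain p q where pq: "p \<in> PS S" "q \<in> PS S" "x = poly p a" "y = poly q a" by blast
    show "x + y \<in> (\<lambda>p. poly p a) ` PS S" using pq subrD(3)[OF P pq(1,2)]
      by (intro image_eqI[of _ _ "p + q"]) auto
    show "x * y \<in> (\<lambda>p. poly p a) ` PS S" using pq subrD(4)[OF P pq(1,2)]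
      by (intro image_eqI[of _ _ "p * q"]) auto
  next
    fix x assume "x \<in> (\<lambda>p. poly p a) ` PS S"
    then obtain p where p: "p \<in> PS S" "x = poly p a" by blast
    show "- x \<in> (\<lambda>p. poly p a) ` PS S" using p subrD(5)[OF P p(1)]
      by (intro image_eqI[of _ _ "- p"]) auto
  qed
qed

lemma noeth_adjoin:
  assumes S: "subr S" and N: "noeth S"
  shows "noeth (adjoin S a)"
  unfolding noeth_def
proof (intro allI impI)
  fix I assume I: "idl (adjoin S a) I"
  define T where "T = adjoin S a"
  have T: "subr T" unfolding T_def by (rule subr_adjoin[OF S])
  have PSS: "subr (PS S)" by (rule subr_PS[OF S])
  have NP: "noeth (PS S)" by (rule noeth_PS[OF S N])
  define P where "P = {p \<in> PS S. poly p a \<in> I}"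
  have PT: "p \<in> PS S \<Longrightarrow> poly p a \<in> T" for p unfolding T_def adjoin_def by blast
  have Pi: "idl (PS S) P" unfolding idl_def
  proof (intro conjI ballI)
    show "P \<subseteq> PS S" unfolding P_def by blast
    show "0 \<in> P" unfolding P_def using subrD(1)[OF PSS] idlD(2)[OF I] by simp
  next
    fix p q assume "p \<in> P" "q \<in> P"
    then show "p + q \<in> P" unfolding P_def using subrD(3)[OF PSS] idlD(3)[OF I] by simp
  next
    fix s p assume s: "s \<in> PS S" and "p \<in> P"
    then show "s * p \<in> P" unfolding P_def using subrD(4)[OF PSS] idlD(4)[OF I, folded T_def] PT[OF s]
      by simp
  qed
  obtain F where F: "finite F" "F \<subseteq> P" "P = lcomb (PS S) F"
    using NP[unfolded noeth_def, rule_format, OF Pi] by blast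
  define G where "G = (\<lambda>p. poly p a) ` F"
  have GI: "G \<subseteq> I" unfolding G_def using F(2) unfolding P_def by blast
  have Gfin: "finite G" unfolding G_def using F(1) by simp
  have IT: "idl T I" using I unfolding T_def .
  have "I = lcomb T G"
  proof
    show "lcomb T G \<subseteq> I" by (rule lcomb_min[OF IT GI])
  next
    have LT: "idl T (lcomb T G)" by (rule lcomb_idl[OF T]) (use GI idlD(1)[OF IT] in blast)
    have GL: "G \<subseteq> lcomb T G" by (rule lcomb_sub[OF T Gfin])
    show "I \<subseteq> lcomb T G"
    proof
      fix y assume y: "y \<in> I"
      then have "y \<in> T" using idlD(1)[OF IT] by blast
      then obtain p where p: "p \<in> PS S" "y = poly p a" unfolding T_def adjoin_def by blast
      then have "p \<in> P" unfolding P_def using y by simp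
      then obtain c where c: "p = (\<Sum>f\<in>F. c f * f)" "\<forall>f\<in>F. c f \<in> PS S"
        unfolding F(3) lcomb_def by blast
      have "y = (\<Sum>f\<in>F. poly (c f) a * poly f a)" unfolding p(2) c(1) by (simp add: poly_sum)
      also have "\<dots> \<in> lcomb T G"
      proof (rule idl_sum[OF LT])
        fix f assume f: "f \<in> F"
        have "poly f a \<in> lcomb T G" using GL f unfolding G_def by blast
        then show "poly (c f) a * poly f a \<in> lcomb T G" using idlD(4)[OF LT PT] c(2) f by blast
      qed
      finally show "y \<in> lcomb T G" .
    qed
  qed
  then show "\<exists>F. finite F \<and> F \<subseteq> I \<and> I = lcomb (adjoin S a) F"
    using Gfin GI unfolding T_def by blast
qed

section \<open>Algebras generated over a field\<close>

locale khom =
  fixes \<iota> :: "'k::field \<Rightarrow> 'a::comm_ring_1"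
  assumes hom: "ring_hom_map \<iota>"
begin

lemma h1: "\<iota> 1 = 1" and hadd: "\<iota> (a + b) = \<iota> a + \<iota> b" and hmult: "\<iota> (a * b) = \<iota> a * \<iota> b"
  using hom unfolding ring_hom_map_def by auto

lemma h0: "\<iota> 0 = 0"
  using hadd[of 0 0] by simp

lemma hneg: "\<iota> (- a) = - \<iota> a"
proof -
  have "\<iota> a + \<iota> (-a) = 0" using hadd[of a "-a"] h0 by simp
  from add.inverse_unique[OF this] show ?thesis by simp
qed

lemma hdiff: "\<iota> (a - b) = \<iota> a - \<iota> b"
  using hadd[of a "-b"] hneg[of b] by simp

lemma hinv: "c \<noteq> 0 \<Longrightarrow> \<iota> (inverse c) * \<iota> c = 1"
  using hmult[of "inverse c" c] h1 by simp

lemma hof_nat: "\<iota> (of_nat n) = of_nat n"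
  by (induction n) (simp_all add: h0 h1 hadd)

lemma hpow: "\<iota> (a ^ n) = \<iota> a ^ n"
  by (induction n) (simp_all add: h1 hmult)

lemma range_add: "a \<in> range \<iota> \<Longrightarrow> b \<in> range \<iota> \<Longrightarrow> a + b \<in> range \<iota>"
proof -
  assume "a \<in> range \<iota>" "b \<in> range \<iota>"
  then obtain x y where "a = \<iota> x" "b = \<iota> y" by blast
  then have "a + b = \<iota> (x + y)" by (simp add: hadd)
  then show ?thesis by simp
qed

lemma range_mult: "a \<in> range \<iota> \<Longrightarrow> b \<in> range \<iota> \<Longrightarrow> a * b \<in> range \<iota>"
proof -
  assume "a \<in> range \<iota>" "b \<in> range \<iota>"
  then obtain x y where "a = \<iota> x" "b = \<iota> y" by blast
  then have "a * b = \<iota> (x * y)" by (simp add: hmult)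
  then show ?thesis by simp
qed

lemma range_neg: "a \<in> range \<iota> \<Longrightarrow> - a \<in> range \<iota>"
proof -
  assume "a \<in> range \<iota>"
  then obtain x where "a = \<iota> x" by blast
  then have "- a = \<iota> (- x)" by (simp add: hneg)
  then show ?thesis by simp
qed

lemma range_0: "0 \<in> range \<iota>" and range_1: "1 \<in> range \<iota>"
proof -
  have "0 = \<iota> 0" "1 = \<iota> 1" by (simp_all add: h0 h1)
  then show "0 \<in> range \<iota>" "1 \<in> range \<iota>" by (metis rangeI)+
qed

lemma subr_range: "subr (range \<iota>)"
  unfolding subr_def by (intro conjI ballI range_0 range_1 range_add range_mult range_neg)

lemma noeth_range: "noeth (range \<iota>)"
  unfolding noeth_def
proof (intro allI impI)
  fix I assume I: "idl (range \<iota>) I"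
  show "\<exists>F. finite F \<and> F \<subseteq> I \<and> I = lcomb (range \<iota>) F"
  proof (cases "I \<subseteq> {0}")
    case True
    then have "I = {0}" using idlD(2)[OF I] by blast
    moreover have "lcomb (range \<iota>) {} = {0}" unfolding lcomb_def by simp
    ultimately show ?thesis by (intro exI[of _ "{}"]) simp
  next
    case False
    then obtain a where a: "a \<in> I" "a \<noteq> 0" by blast
    then obtain c where c: "a = \<iota> c" using idlD(1)[OF I] by blast
    have "c \<noteq> 0" using a c h0 by blast
    have Iall: "I = range \<iota>"
    proof
      show "I \<subseteq> range \<iota>" by (rule idlD(1)[OF I])
    next
      show "range \<iota> \<subseteq> I"
      proof
        fix y assume "y \<in> range \<iota>"
        then obtain d where d: "y = \<iota> d" by blast
        have "\<iota> (d * inverse c) * a \<in> I" using idlD(4)[OF I _ a(1)] by blast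
        moreover have "\<iota> (d * inverse c) * a = y" unfolding c d hmult[symmetric]
          using \<open>c \<noteq> 0\<close> by (simp add: mult.assoc)
        ultimately show "y \<in> I" by simp
      qed
    qed
    have "1 \<in> I" unfolding Iall using h1 by (metis rangeI)
    moreover have "lcomb (range \<iota>) {1} = range \<iota>"
    proof
      show "lcomb (range \<iota>) {1} \<subseteq> range \<iota>" unfolding lcomb_def by auto
      show "range \<iota> \<subseteq> lcomb (range \<iota>) {1}"
      proof
        fix y assume y: "y \<in> range \<iota>"
        show "y \<in> lcomb (range \<iota>) {1}" unfolding lcomb_def using y
          by (intro CollectI exI[of _ "\<lambda>_. y"]) simp
      qed
    qed
    ultimately show ?thesis using Iall by (intro exI[of _ "{1}"]) simp
  qed
qed

lemma alg_gen_mono: "G \<subseteq> H \<Longrightarrow> alg_gen \<iota> G \<subseteq> alg_gen \<iota> H"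
proof
  fix x assume GH: "G \<subseteq> H" and x: "x \<in> alg_gen \<iota> G"
  from x show "x \<in> alg_gen \<iota> H"
  proof (induction x rule: alg_gen.induct)
    case (gen_base x) then show ?case using GH alg_gen.gen_base by blast
  next
    case (gen_const c) then show ?case by (rule alg_gen.gen_const)
  next
    case (gen_add x y) show ?case using gen_add.IH by (rule alg_gen.gen_add)
  next
    case (gen_uminus x) show ?case using gen_uminus.IH by (rule alg_gen.gen_uminus)
  next
    case (gen_mult x y) show ?case using gen_mult.IH by (rule alg_gen.gen_mult)
  qed
qed

lemma subr_alg_gen: "subr (alg_gen \<iota> G)"
  unfolding subr_def
proof (intro conjI ballI)
  show "0 \<in> alg_gen \<iota> G" using alg_gen.gen_const[of \<iota> 0 G] h0 by simp
  show "1 \<in> alg_gen \<iota> G" using alg_gen.gen_const[of \<iota> 1 G] h1 by simp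
next
  fix a b assume "a \<in> alg_gen \<iota> G" "b \<in> alg_gen \<iota> G"
  then show "a + b \<in> alg_gen \<iota> G" "a * b \<in> alg_gen \<iota> G"
    by (simp_all add: alg_gen.gen_add alg_gen.gen_mult)
next
  fix a assume "a \<in> alg_gen \<iota> G"
  then show "- a \<in> alg_gen \<iota> G" by (simp add: alg_gen.gen_uminus)
qed

lemma alg_gen_empty: "alg_gen \<iota> {} = range \<iota>"
proof
  show "alg_gen \<iota> {} \<subseteq> range \<iota>"
  proof
    fix x assume "x \<in> alg_gen \<iota> {}"
    then show "x \<in> range \<iota>"
    proof (induction x rule: alg_gen.induct)
      case (gen_base x) then show ?case by simp
    next
      case (gen_const c) then show ?case by simp
    next
      case (gen_add x y) show ?case using gen_add.IH by (rule range_add)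
    next
      case (gen_uminus x) show ?case using gen_uminus.IH by (rule range_neg)
    next
      case (gen_mult x y) show ?case using gen_mult.IH by (rule range_mult)
    qed
  qed
  show "range \<iota> \<subseteq> alg_gen \<iota> {}"
  proof
    fix y assume "y \<in> range \<iota>"
    then obtain c where "y = \<iota> c" by blast
    then show "y \<in> alg_gen \<iota> {}" using alg_gen.gen_const[of \<iota> c "{}"] by simp
  qed
qed

lemma alg_gen_insert: "alg_gen \<iota> (insert g G) = adjoin (alg_gen \<iota> G) g"
proof
  let ?S = "alg_gen \<iota> G"
  have S: "subr ?S" by (rule subr_alg_gen)
  have A: "subr (adjoin ?S g)" by (rule subr_adjoin[OF S])
  have const: "s \<in> ?S \<Longrightarrow> s \<in> adjoin ?S g" for s
    unfolding adjoin_def using PS_const[OF S, of s] by (intro image_eqI[of _ _ "[:s:]"]) auto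
  show "alg_gen \<iota> (insert g G) \<subseteq> adjoin ?S g"
  proof
    fix x assume "x \<in> alg_gen \<iota> (insert g G)"
    then show "x \<in> adjoin ?S g"
    proof (induction x rule: alg_gen.induct)
      case (gen_base x)
      show ?case
      proof (cases "x = g")
        case True
        have "[:0, 1:] \<in> PS ?S" unfolding PS_def using subrD(1,2)[OF S]
          by (auto simp: coeff_pCons split: nat.split)
        then show ?thesis unfolding True adjoin_def by (intro image_eqI[of _ _ "[:0, 1:]"]) auto
      next
        case False
        then have "x \<in> G" using gen_base by simp
        then show ?thesis using const[OF alg_gen.gen_base[of x G \<iota>]] by simp
      qed
    next
      case (gen_const c) then show ?case using const[OF alg_gen.gen_const[of \<iota> c G]] by simp
    next
      case (gen_add x y) show ?case using gen_add.IH by (rule subrD(3)[OF A])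
    next
      case (gen_uminus x) show ?case using gen_uminus.IH by (rule subrD(5)[OF A])
    next
      case (gen_mult x y) show ?case using gen_mult.IH by (rule subrD(4)[OF A])
    qed
  qed
  show "adjoin ?S g \<subseteq> alg_gen \<iota> (insert g G)"
  proof
    fix y assume "y \<in> adjoin ?S g"
    then obtain p where p: "p \<in> PS ?S" "y = poly p g" unfolding adjoin_def by blast
    have "p \<in> PS ?S \<Longrightarrow> poly p g \<in> alg_gen \<iota> (insert g G)" for p
    proof (induction p)
      case 0 then show ?case using subrD(1)[OF subr_alg_gen] by simp
    next
      case (pCons c p)
      have "coeff (pCons c p) 0 \<in> ?S" using pCons.prems unfolding PS_def by blast
      then have c: "c \<in> ?S" by simp
      have "p \<in> PS ?S" using pCons.prems unfolding PS_def
      proof (intro CollectI allI)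
        fix i assume "pCons c p \<in> {p. \<forall>i. coeff p i \<in> ?S}"
        then have "coeff (pCons c p) (Suc i) \<in> ?S" by blast
        then show "coeff p i \<in> ?S" by simp
      qed
      then have "poly p g \<in> alg_gen \<iota> (insert g G)" by (rule pCons.IH)
      moreover have "c \<in> alg_gen \<iota> (insert g G)" using c alg_gen_mono[of G "insert g G"] by blast
      moreover have "g \<in> alg_gen \<iota> (insert g G)" by (rule alg_gen.gen_base) simp
      ultimately have "c + g * poly p g \<in> alg_gen \<iota> (insert g G)"
        by (intro alg_gen.gen_add alg_gen.gen_mult)
      then show ?case by simp
    qed
    then show "y \<in> alg_gen \<iota> (insert g G)" using p by blast
  qed
qed

lemma noeth_alg_gen: "finite G \<Longrightarrow> noeth (alg_gen \<iota> G)"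
proof (induction G rule: finite_induct)
  case empty then show ?case using noeth_range by (simp add: alg_gen_empty)
next
  case (insert g G)
  show ?case unfolding alg_gen_insert by (rule noeth_adjoin[OF subr_alg_gen insert.IH])
qed

end



lemma funpow_zero_mono:
  fixes f :: "'a::comm_ring_1 \<Rightarrow> 'a"
  assumes f0: "f 0 = 0" and k: "(f ^^ k) c = 0" and le: "k \<le> k'"
  shows "(f ^^ k') c = 0"
proof -
  have fz: "(f ^^ j) 0 = 0" for j by (induction j) (simp_all add: f0)
  obtain j where "k' = j + k" using le by (metis le_add_diff_inverse2)
  then show ?thesis by (simp add: funpow_add k fz)
qed

lemma LND_conj:
  fixes \<sigma> \<tau> :: "'r::comm_ring_1 \<Rightarrow> 'r" and \<iota> :: "'k \<Rightarrow> 'r"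
  assumes st: "\<And>a. \<sigma> (\<tau> a) = a" and ts: "\<And>a. \<tau> (\<sigma> a) = a"
    and sadd: "\<And>a b. \<sigma> (a + b) = \<sigma> a + \<sigma> b" and smul: "\<And>a b. \<sigma> (a * b) = \<sigma> a * \<sigma> b"
    and s1: "\<sigma> 1 = 1" and sc: "\<And>c. \<sigma> (\<iota> c) = \<iota> c"
    and D: "D \<in> LND_star \<iota>"
  shows "(\<lambda>y. \<sigma> (D (\<tau> y))) \<in> LND_star \<iota>"
proof -
  have s0: "\<sigma> 0 = 0" using sadd[of 0 0] by simp
  have tadd: "\<tau> (a + b) = \<tau> a + \<tau> b" for a b
  proof -
    have "\<sigma> (\<tau> a + \<tau> b) = a + b" by (simp add: sadd st)
    then have "\<tau> (a + b) = \<tau> (\<sigma> (\<tau> a + \<tau> b))" by simp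
    then show ?thesis by (simp only: ts)
  qed
  have tmul: "\<tau> (a * b) = \<tau> a * \<tau> b" for a b
  proof -
    have "\<sigma> (\<tau> a * \<tau> b) = a * b" by (simp add: smul st)
    then have "\<tau> (a * b) = \<tau> (\<sigma> (\<tau> a * \<tau> b))" by simp
    then show ?thesis by (simp only: ts)
  qed
  have tc: "\<tau> (\<iota> c) = \<iota> c" for c
  proof -
    have "\<tau> (\<iota> c) = \<tau> (\<sigma> (\<iota> c))" by (simp only: sc)
    then show ?thesis by (simp only: ts)
  qed
  from D have der: "is_derivation \<iota> D" and nil: "\<forall>a. \<exists>n. (D ^^ n) a = 0" and sl: "\<exists>s. D s = 1"
    unfolding LND_star_def is_LND_def by auto
  have Dadd: "D (a + b) = D a + D b" and Dmul: "D (a * b) = a * D b + b * D a" and Dc: "D (\<iota> c) = 0" for a b c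
    using der unfolding is_derivation_def by auto
  let ?D = "\<lambda>y. \<sigma> (D (\<tau> y))"
  have "is_derivation \<iota> ?D" unfolding is_derivation_def
  proof (intro conjI allI)
    fix a b
    show "?D (a + b) = ?D a + ?D b" by (simp add: tadd Dadd sadd)
    show "?D (a * b) = a * ?D b + b * ?D a" by (simp add: tmul Dmul sadd smul st)
  next
    fix c show "?D (\<iota> c) = 0" by (simp add: tc Dc s0)
  qed
  moreover have pw: "(?D ^^ n) y = \<sigma> ((D ^^ n) (\<tau> y))" for n y
    by (induction n) (simp_all add: st ts)
  have "\<forall>a. \<exists>n. (?D ^^ n) a = 0"
  proof
    fix a
    obtain n where "(D ^^ n) (\<tau> a) = 0" using nil by blast
    then have "(?D ^^ n) a = 0" using pw[of n a] s0 by simp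
    then show "\<exists>n. (?D ^^ n) a = 0" by blast
  qed
  moreover obtain s where "D s = 1" using sl by blast
  then have "?D (\<sigma> s) = 1" by (simp add: ts s1)
  ultimately show ?thesis unfolding LND_star_def is_LND_def by blast
qed

lemma HD_aut:
  fixes \<sigma> \<tau> :: "'r::comm_ring_1 \<Rightarrow> 'r" and \<iota> :: "'k \<Rightarrow> 'r"
  assumes st: "\<And>a. \<sigma> (\<tau> a) = a" and ts: "\<And>a. \<tau> (\<sigma> a) = a"
    and sadd: "\<And>a b. \<sigma> (a + b) = \<sigma> a + \<sigma> b" and smul: "\<And>a b. \<sigma> (a * b) = \<sigma> a * \<sigma> b"
    and s1: "\<sigma> 1 = 1" and sc: "\<And>c. \<sigma> (\<iota> c) = \<iota> c"
    and p: "p \<in> HD_star \<iota>"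
  shows "\<sigma> p \<in> HD_star \<iota>"
proof -
  have s0: "\<sigma> 0 = 0" using sadd[of 0 0] by simp
  have sneg: "\<sigma> (- a) = - \<sigma> a" for a
  proof -
    have "\<sigma> a + \<sigma> (-a) = 0" using sadd[of a "-a"] s0 by simp
    from add.inverse_unique[OF this] show ?thesis by simp
  qed
  let ?G = "\<Union>D\<in>LND_star \<iota>. {a. D a = 0}"
  have gen: "\<sigma> a \<in> ?G" if "a \<in> ?G" for a
  proof -
    from that obtain D where D: "D \<in> LND_star \<iota>" "D a = 0" by blast
    have "(\<lambda>y. \<sigma> (D (\<tau> y))) \<in> LND_star \<iota>" by (rule LND_conj[OF st ts sadd smul s1 sc D(1)])
    moreover have "\<sigma> (D (\<tau> (\<sigma> a))) = 0" using D(2) by (simp add: ts s0)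
    ultimately show ?thesis by blast
  qed
  from p have "p \<in> alg_gen \<iota> ?G" unfolding HD_star_def .
  then have "\<sigma> p \<in> alg_gen \<iota> ?G"
  proof (induction p rule: alg_gen.induct)
    case (gen_base x) then show ?case using alg_gen.gen_base[OF gen[of x]] by blast
  next
    case (gen_const c) then show ?case using alg_gen.gen_const[of \<iota> c ?G] by (simp only: sc)
  next
    case (gen_add x y)
    have "\<sigma> x + \<sigma> y \<in> alg_gen \<iota> ?G" using gen_add.IH by (rule alg_gen.gen_add)
    then show ?case by (simp only: sadd)
  next
    case (gen_uminus x)
    have "- \<sigma> x \<in> alg_gen \<iota> ?G" using gen_uminus.IH by (rule alg_gen.gen_uminus)
    then show ?case by (simp only: sneg)
  next
    case (gen_mult x y)
    have "\<sigma> x * \<sigma> y \<in> alg_gen \<iota> ?G" using gen_mult.IH by (rule alg_gen.gen_mult)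
    then show ?case by (simp only: smul)
  qed
  then show ?thesis unfolding HD_star_def .
qed



lemma pderiv_const': "pderiv [:c:] = 0"
  by (simp add: pderiv_pCons)

lemma pderiv_nil: "degree p \<le> n \<Longrightarrow> (pderiv ^^ Suc n) p = 0"
proof (induction n arbitrary: p)
  case 0
  then have "p = [:coeff p 0:]" using degree_0_id[of p] by simp
  then have "pderiv p = 0" by (metis pderiv_const')
  then show ?case by simp
next
  case (Suc n)
  have "degree (pderiv p) \<le> n"
  proof (rule degree_le, intro allI impI)
    fix i assume "n < i"
    then have "degree p < Suc i" using Suc.prems by linarith
    then show "coeff (pderiv p) i = 0" by (simp add: coeff_pderiv coeff_eq_0)
  qed
  then have "(pderiv ^^ Suc n) (pderiv p) = 0" by (rule Suc.IH)
  then show ?case by (simp only: funpow_Suc_right o_apply)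
qed

lemma pderiv_LND: "pderiv \<in> LND_star (\<lambda>c. [:(\<iota> :: 'k \<Rightarrow> 'b::idom) c:])"
proof -
  have "is_derivation (\<lambda>c. [:\<iota> c:]) (pderiv :: 'b poly \<Rightarrow> 'b poly)"
    unfolding is_derivation_def by (simp add: pderiv_add pderiv_mult pderiv_const')
  moreover have "\<forall>a :: 'b poly. \<exists>n. (pderiv ^^ n) a = 0"
    using pderiv_nil[OF order_refl] by blast
  moreover have "pderiv [:0, 1 :: 'b:] = 1" by (simp add: pderiv_pCons)
  ultimately show ?thesis unfolding LND_star_def is_LND_def by blast
qed

locale lndctx = khom \<iota> for \<iota> :: "'k::field_char_0 \<Rightarrow> 'b::idom" +
  fixes d :: "'b \<Rightarrow> 'b"
  assumes lnd: "is_LND \<iota> d"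
begin

lemma dadd: "d (a + b) = d a + d b" and dmul: "d (a * b) = a * d b + b * d a"
  and dc: "d (\<iota> c) = 0" and dnil: "\<exists>n. (d ^^ n) a = 0"
  using lnd unfolding is_LND_def is_derivation_def by auto

lemma d0: "d 0 = 0" using dadd[of 0 0] by (metis add.right_neutral add_left_cancel)

lemma dneg: "d (- a) = - d a"
proof -
  have "d a + d (-a) = 0" using dadd[of a "-a"] d0 by simp
  from add.inverse_unique[OF this] show ?thesis by simp
qed

lemma ddiff: "d (a - b) = d a - d b"
  using dadd[of a "-b"] dneg[of b] by simp

lemma dsum: "d (sum f A) = (\<Sum>x\<in>A. d (f x))"
  by (induction A rule: infinite_finite_induct) (simp_all add: d0 dadd)

lemma d1: "d 1 = 0" using dc[of 1] h1 by simp

lemma dnat: "d (of_nat j) = 0"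
  using dc[of "of_nat j"] hof_nat by simp

lemma dpow0: "(d ^^ k) 0 = 0"
  by (induction k) (simp_all add: d0)

lemma dpow_diff: "(d ^^ k) (a - b) = (d ^^ k) a - (d ^^ k) b"
  by (induction k) (simp_all add: ddiff)

lemma dpow_nat: "(d ^^ k) (of_nat j * a) = of_nat j * (d ^^ k) a"
  by (induction k) (simp_all add: dmul dnat)

lemma dpow_mono: "(d ^^ k) c = 0 \<Longrightarrow> k \<le> k' \<Longrightarrow> (d ^^ k') c = 0"
  using funpow_zero_mono[of d k c k'] d0 by blast

definition dm :: "'b poly \<Rightarrow> 'b poly" where "dm p = map_poly d p"

lemma coeff_dm: "coeff (dm p) i = d (coeff p i)"
  unfolding dm_def by (rule coeff_map_poly[of d, OF d0])

lemma dm_add: "dm (p + q) = dm p + dm q"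
  by (rule poly_eqI) (simp add: coeff_dm dadd)

lemma dm_mult: "dm (p * q) = p * dm q + q * dm p"
proof (rule poly_eqI)
  fix k
  have "coeff (dm (p * q)) k = (\<Sum>i\<le>k. coeff p i * d (coeff q (k - i)) + coeff q (k - i) * d (coeff p i))"
    by (simp add: coeff_dm coeff_mult dsum dmul)
  also have "\<dots> = (\<Sum>i\<le>k. coeff p i * d (coeff q (k - i))) + (\<Sum>i\<le>k. d (coeff p i) * coeff q (k - i))"
    by (simp add: sum.distrib mult.commute)
  also have "\<dots> = coeff (p * dm q + dm p * q) k"
    by (simp add: coeff_mult coeff_dm)
  finally show "coeff (dm (p * q)) k = coeff (p * dm q + q * dm p) k" by (simp add: mult.commute)
qed

lemma dm_const: "dm [:x:] = [:d x:]"
  by (rule poly_eqI) (simp add: coeff_dm coeff_pCons d0 split: nat.split)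

lemma dm_monom: "dm (monom x n) = monom (d x) n"
  by (rule poly_eqI) (simp add: coeff_dm d0)

definition Dn :: "nat \<Rightarrow> 'b poly \<Rightarrow> 'b poly" where
  "Dn m p = pderiv p - monom 1 m * dm p"

lemma coeff_Dn: "coeff (Dn m p) i =
   of_nat (Suc i) * coeff p (Suc i) - (if i < m then 0 else d (coeff p (i - m)))"
  unfolding Dn_def by (simp add: coeff_pderiv coeff_monom_mult coeff_dm)

lemma Dn_der: "is_derivation (\<lambda>c. [:\<iota> c:]) (Dn m)"
  unfolding is_derivation_def
proof (intro conjI allI)
  fix a b :: "'b poly"
  show "Dn m (a + b) = Dn m a + Dn m b" unfolding Dn_def by (simp add: pderiv_add dm_add algebra_simps)
  show "Dn m (a * b) = a * Dn m b + b * Dn m a" unfolding Dn_def by (simp add: pderiv_mult dm_mult algebra_simps)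
next
  fix c show "Dn m [:\<iota> c:] = 0" unfolding Dn_def by (simp add: pderiv_const' dm_const dc)
qed

definition W :: "nat \<Rightarrow> nat \<Rightarrow> 'b poly \<Rightarrow> bool" where
  "W m w p \<longleftrightarrow> (\<forall>i. coeff p i \<noteq> 0 \<longrightarrow> i \<le> w \<and> (d ^^ ((w - i) div Suc m + 1)) (coeff p i) = 0)"

lemma W_step:
  assumes "W m (Suc w) p"
  shows "W m w (Dn m p)"
  unfolding W_def
proof (intro allI impI)
  fix i assume ne: "coeff (Dn m p) i \<noteq> 0"
  define A where "A = of_nat (Suc i) * coeff p (Suc i)"
  define B where "B = (if i < m then 0 else d (coeff p (i - m)))"
  define k where "k = (w - i) div Suc m + 1"
  have c: "coeff (Dn m p) i = A - B" unfolding A_def B_def coeff_Dn ..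
  have WA: "i \<le> w \<and> (d ^^ k) A = 0" if "A \<noteq> 0"
  proof -
    have "coeff p (Suc i) \<noteq> 0" using that unfolding A_def by auto
    then have "Suc i \<le> Suc w" "(d ^^ ((Suc w - Suc i) div Suc m + 1)) (coeff p (Suc i)) = 0"
      using assms unfolding W_def by blast+
    then show ?thesis unfolding A_def k_def dpow_nat by simp
  qed
  have WB: "i \<le> w \<and> (d ^^ k) B = 0" if "B \<noteq> 0"
  proof -
    have im: "\<not> i < m" using that unfolding B_def by auto
    then have Bd: "B = d (coeff p (i - m))" unfolding B_def by simp
    then have "coeff p (i - m) \<noteq> 0" using that d0 by auto
    then have 1: "i - m \<le> Suc w" and 2: "(d ^^ ((Suc w - (i - m)) div Suc m + 1)) (coeff p (i - m)) = 0"
      using assms unfolding W_def by blast+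
    define e where "e = Suc w - (i - m)"
    have "e \<ge> Suc m"
    proof (rule ccontr)
      assume "\<not> e \<ge> Suc m"
      then have "e div Suc m = 0" by simp
      then have "d (coeff p (i - m)) = 0" using 2 unfolding e_def[symmetric] by simp
      then show False using that Bd by simp
    qed
    then have iw: "i \<le> w" and ee: "e = (w - i) + Suc m" using im 1 unfolding e_def by linarith+
    have "e div Suc m = k" unfolding ee k_def by (rule div_add_self2) simp
    then have "(d ^^ Suc k) (coeff p (i - m)) = 0" using 2 unfolding e_def[symmetric] by simp
    then have "(d ^^ k) B = 0" unfolding Bd by (simp only: funpow_Suc_right o_apply)
    then show ?thesis using iw by simp
  qed
  have "A \<noteq> 0 \<or> B \<noteq> 0" using ne c by auto
  then have iw: "i \<le> w" using WA WB by blast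
  have "(d ^^ k) A = 0" using WA dpow0 by (cases "A = 0") auto
  moreover have "(d ^^ k) B = 0" using WB dpow0 by (cases "B = 0") auto
  ultimately have "(d ^^ k) (coeff (Dn m p) i) = 0" unfolding c dpow_diff by simp
  then show "i \<le> w \<and> (d ^^ ((w - i) div Suc m + 1)) (coeff (Dn m p) i) = 0"
    using iw unfolding k_def by simp
qed

lemma W_base:
  assumes "W m 0 p"
  shows "Dn m p = 0"
proof (rule poly_eqI)
  fix i
  have A: "coeff p (Suc i) = 0" using assms unfolding W_def by (metis Suc_neq_Zero le_zero_eq)
  have B: "(if i < m then 0 else d (coeff p (i - m))) = 0"
  proof (cases "i < m")
    case False
    show ?thesis
    proof (cases "coeff p (i - m) = 0")
      case True then show ?thesis by (simp add: d0)
    next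
      case ne: False
      then have "i - m \<le> 0" "(d ^^ ((0 - (i - m)) div Suc m + 1)) (coeff p (i - m)) = 0"
        using assms unfolding W_def by blast+
      then show ?thesis using False by simp
    qed
  qed simp
  show "coeff (Dn m p) i = coeff 0 i" unfolding coeff_Dn A B by simp
qed

lemma W_nil: "W m w p \<Longrightarrow> (Dn m ^^ Suc w) p = 0"
proof (induction w arbitrary: p)
  case 0 then show ?case using W_base by simp
next
  case (Suc w)
  have "(Dn m ^^ Suc w) (Dn m p) = 0" by (rule Suc.IH[OF W_step[OF Suc.prems]])
  then show ?case by (simp only: funpow_Suc_right o_apply)
qed

lemma W_ex: "\<exists>w. W m w p"
proof -
  have "\<forall>i. \<exists>k. (d ^^ k) (coeff p i) = 0" using dnil by blast
  then obtain kf where kf: "\<And>i. (d ^^ kf i) (coeff p i) = 0" by metis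
  define K where "K = Max (kf ` {..degree p})"
  define w where "w = degree p + Suc m * K"
  have "W m w p" unfolding W_def
  proof (intro allI impI conjI)
    fix i assume ne: "coeff p i \<noteq> 0"
    then have ideg: "i \<le> degree p" by (simp add: le_degree)
    then show "i \<le> w" unfolding w_def by simp
    have "kf i \<le> K" unfolding K_def using ideg by simp
    moreover have "K \<le> (w - i) div Suc m"
    proof -
      have "Suc m * K \<le> w - i" unfolding w_def using ideg by simp
      then have "(Suc m * K) div Suc m \<le> (w - i) div Suc m" by (rule div_le_mono)
      moreover have eq: "(Suc m * K) div Suc m = K" by (rule div_mult_self1_is_m) simp
      ultimately show ?thesis by (simp only: eq)
    qed
    ultimately have "kf i \<le> (w - i) div Suc m + 1" by simp
    then show "(d ^^ ((w - i) div Suc m + 1)) (coeff p i) = 0" using kf dpow_mono by blast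
  qed
  then show ?thesis by blast
qed

lemma Dn_LND: "Dn m \<in> LND_star (\<lambda>c. [:\<iota> c:])"
proof -
  have "\<forall>a. \<exists>n. (Dn m ^^ n) a = 0" using W_ex W_nil by blast
  moreover have "Dn m [:0, 1:] = 1"
  proof -
    have "dm [:0, 1:] = 0" by (rule poly_eqI) (simp add: coeff_dm coeff_pCons d0 d1 split: nat.split)
    then show ?thesis unfolding Dn_def by (simp add: pderiv_pCons)
  qed
  ultimately show ?thesis using Dn_der unfolding LND_star_def is_LND_def by blast
qed

end



lemma coeff_pcompose_scale: fixes p :: "'a::comm_ring_1 poly" shows "coeff (pcompose p [:0, a:]) k = a ^ k * coeff p k"
proof (induction p arbitrary: k)
  case 0 then show ?case by simp
next
  case (pCons c p)
  have e: "pcompose (pCons c p) [:0, a:] = pCons c (smult a (pcompose p [:0, a:]))"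
    by (simp add: pcompose_pCons)
  show ?case unfolding e by (cases k) (simp_all add: pCons.IH mult.assoc)
qed

lemma pcompose_pow: "pcompose (p ^ k) q = (pcompose p q) ^ k"
  by (induction k) (simp_all add: pcompose_mult pcompose_1)

lemma shift_pow_coeff: "coeff ([:1, 1:] ^ k) 0 = (1::'a::comm_ring_1) \<and> coeff ([:1, 1:] ^ k) 1 = (of_nat k :: 'a)"
proof (induction k)
  case 0 then show ?case by simp
next
  case (Suc k)
  have e: "[:1, 1:] ^ Suc k = [:1, 1:] ^ k + pCons 0 ([:1, 1::'a:] ^ k)"
    by (simp add: power_Suc)
  show ?case unfolding e using Suc.IH by (simp add: coeff_pCons)
qed

lemma coeff_shift_monom: "coeff (pcompose (monom c k) [:1, 1:]) 1 = of_nat k * (c::'a::comm_ring_1)"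
proof -
  have "pcompose (monom c k) [:1, 1:] = smult c ([:1, 1:] ^ k)"
    unfolding monom_altdef pcompose_smult pcompose_pow by (simp add: pcompose_pCons)
  moreover have "coeff ([:1, 1:] ^ k) 1 = (of_nat k :: 'a)" using shift_pow_coeff by blast
  ultimately show ?thesis by (simp add: mult.commute)
qed

lemma HD_mem:
  assumes "D \<in> LND_star \<iota>" "D a = 0"
  shows "a \<in> HD_star \<iota>"
  unfolding HD_star_def using assms by (intro alg_gen.gen_base) blast

locale setting = khom \<iota> for \<iota> :: "'k::field_char_0 \<Rightarrow> 'b::idom"
begin

definition \<iota>' :: "'k \<Rightarrow> 'b poly" where "\<iota>' c = [:\<iota> c:]"

lemma khom': "khom \<iota>'"
  unfolding khom_def ring_hom_map_def \<iota>'_def by (simp add: h1 hadd hmult)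

definition R :: "'b poly set" where "R = HD_star (\<lambda>c. [:\<iota> c:])"

lemma R_alt: "R = alg_gen \<iota>' (\<Union>D\<in>LND_star \<iota>'. {a. D a = 0})"
  unfolding R_def HD_star_def \<iota>'_def[abs_def] ..

lemma subrR: "subr R"
  unfolding R_alt by (rule khom.subr_alg_gen[OF khom'])

lemma constR: "[:b:] \<in> R"
  unfolding R_def by (rule HD_mem[OF pderiv_LND]) (simp add: pderiv_const')

lemma i2: "\<iota> 2 = 2"
  using hof_nat[of 2] by simp

lemma char_ne: "(of_nat n :: 'k) \<noteq> 0 \<Longrightarrow> True" by simp

lemma compR:
  assumes p: "p \<in> R" and a: "a \<noteq> 0"
  shows "pcompose p [:\<iota> b, \<iota> a:] \<in> R"
proof -
  let ?q = "[:\<iota> b, \<iota> a:]" and ?r = "[:- \<iota> (b * inverse a), \<iota> (inverse a):]"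
  have ia: "\<iota> (inverse a) * \<iota> a = 1" by (rule hinv[OF a])
  have ia': "\<iota> a * \<iota> (inverse a) = 1" using ia by (simp add: mult.commute)
  have qr: "pcompose ?r ?q = [:0, 1:]"
  proof -
    have "pcompose ?r ?q = [:- \<iota> (b * inverse a):] + smult (\<iota> (inverse a)) ?q"
      by (simp add: pcompose_pCons mult.commute)
    also have "\<dots> = [:0, 1:]"
      by (simp add: hmult ia ia' algebra_simps)
    finally show ?thesis .
  qed
  have rq: "pcompose ?q ?r = [:0, 1:]"
  proof -
    have "pcompose ?q ?r = [:\<iota> b:] + smult (\<iota> a) ?r"
      by (simp add: pcompose_pCons mult.commute)
    also have "\<dots> = [:0, 1:]"
      by (simp add: hmult ia ia' algebra_simps)
    finally show ?thesis .
  qed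
  show ?thesis unfolding R_def
  proof (rule HD_aut[where \<tau> = "\<lambda>x. pcompose x ?r" and \<sigma> = "\<lambda>x. pcompose x ?q"])
    show "pcompose (pcompose x ?r) ?q = x" for x
      by (simp only: pcompose_assoc[symmetric] qr pcompose_idR)
    show "pcompose (pcompose x ?q) ?r = x" for x
      by (simp only: pcompose_assoc[symmetric] rq pcompose_idR)
    show "pcompose (x + y) ?q = pcompose x ?q + pcompose y ?q" for x y by (rule pcompose_add)
    show "pcompose (x * y) ?q = pcompose x ?q * pcompose y ?q" for x y by (rule pcompose_mult)
    show "pcompose 1 ?q = 1" by (rule pcompose_1)
    show "pcompose [:\<iota> c:] ?q = [:\<iota> c:]" for c by simp
    show "p \<in> HD_star (\<lambda>c. [:\<iota> c:])" using p unfolding R_def .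
  qed
qed

lemma comp2: "p \<in> R \<Longrightarrow> pcompose p [:0, 2:] \<in> R"
  using compR[of p 2 0] by (simp add: h0 i2)

lemma comp1: "p \<in> R \<Longrightarrow> pcompose p [:1, 1:] \<in> R"
  using compR[of p 1 1] by (simp add: h1)

lemma scaleR: "q \<in> R \<Longrightarrow> [:c:] * q \<in> R"
  using subrD(4)[OF subrR constR] by blast

lemma two_pow_ne: "k \<noteq> n \<Longrightarrow> (2::'k) ^ k - 2 ^ n \<noteq> 0"
proof
  assume "k \<noteq> n" "(2::'k) ^ k - 2 ^ n = 0"
  then have "(of_nat (2 ^ k) :: 'k) = of_nat (2 ^ n)" by simp
  then have "(2::nat) ^ k = 2 ^ n" by (simp only: of_nat_eq_iff)
  then show False using \<open>k \<noteq> n\<close> by simp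
qed

lemma lemmaA: "p \<in> R \<Longrightarrow> monom (coeff p k) k \<in> R"
proof (induction "degree p" arbitrary: p k rule: less_induct)
  case less
  show ?case
  proof (cases "degree p = 0")
    case True
    then have pc: "p = [:coeff p 0:]" using degree_0_id[of p] by simp
    show ?thesis
    proof (cases k)
      case 0 then show ?thesis using less.prems pc by (simp add: monom_0)
    next
      case (Suc k')
      then have "coeff p k = 0" using True by (simp add: coeff_eq_0)
      then show ?thesis using subrD(1)[OF subrR] by simp
    qed
  next
    case False
    define n where "n = degree p"
    define s where "s = pcompose p [:0, 2:] - [:2 ^ n:] * p"
    have sR: "s \<in> R" unfolding s_def
      using subr_diff[OF subrR comp2[OF less.prems] scaleR[OF less.prems]] .
    have cs: "coeff s i = (2 ^ i - 2 ^ n) * coeff p i" for i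
      unfolding s_def by (simp add: coeff_pcompose_scale algebra_simps)
    have ds: "degree s < degree p"
    proof -
      have "degree s \<le> n - 1"
      proof (rule degree_le, intro allI impI)
        fix i assume "n - 1 < i"
        then have "i = n \<or> i > n" using False n_def by linarith
        then show "coeff s i = 0" unfolding cs using n_def by (auto simp: coeff_eq_0)
      qed
      then show ?thesis using False n_def by linarith
    qed
    show ?thesis
    proof (cases "k = n")
      case False
      define t where "t = (2::'k) ^ k - 2 ^ n"
      have t: "t \<noteq> 0" unfolding t_def by (rule two_pow_ne[OF False])
      have it: "\<iota> t = 2 ^ k - 2 ^ n" unfolding t_def by (simp add: hdiff hpow i2)
      have "monom (coeff s k) k \<in> R" by (rule less.hyps[OF ds sR])
      then have "[:\<iota> (inverse t):] * monom (coeff s k) k \<in> R" by (rule scaleR)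
      moreover have "[:\<iota> (inverse t):] * monom (coeff s k) k = monom (coeff p k) k"
        unfolding cs it[symmetric] using hinv[OF t] by (simp add: smult_monom mult.assoc[symmetric])
      ultimately show ?thesis by simp
    next
      case True
      have others: "monom (coeff p i) i \<in> R" if "i < n" for i
      proof -
        define t where "t = (2::'k) ^ i - 2 ^ n"
        have t: "t \<noteq> 0" unfolding t_def using that by (intro two_pow_ne) simp
        have it: "\<iota> t = 2 ^ i - 2 ^ n" unfolding t_def by (simp add: hdiff hpow i2)
        have "monom (coeff s i) i \<in> R" by (rule less.hyps[OF ds sR])
        then have "[:\<iota> (inverse t):] * monom (coeff s i) i \<in> R" by (rule scaleR)
        moreover have "[:\<iota> (inverse t):] * monom (coeff s i) i = monom (coeff p i) i"
          unfolding cs it[symmetric] using hinv[OF t] by (simp add: smult_monom mult.assoc[symmetric])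
        ultimately show ?thesis by simp
      qed
      have "p = (\<Sum>i\<le>n. monom (coeff p i) i)" unfolding n_def by (simp add: poly_as_sum_of_monoms)
      also have "\<dots> = (\<Sum>i<n. monom (coeff p i) i) + monom (coeff p n) n"
        by (simp add: lessThan_Suc_atMost[symmetric])
      finally have pe: "p = (\<Sum>i<n. monom (coeff p i) i) + monom (coeff p n) n" .
      then have "monom (coeff p n) n = p - (\<Sum>i<n. monom (coeff p i) i)"
        by (metis add_diff_cancel_left')
      moreover have "(\<Sum>i<n. monom (coeff p i) i) \<in> R" by (rule subr_sum[OF subrR]) (use others in simp)
      ultimately have "monom (coeff p n) n \<in> R" using subr_diff[OF subrR less.prems] by simp
      then show ?thesis using True by simp
    qed
  qed
qed

lemma lemmaB:
  assumes "monom c k \<in> R" "k \<ge> 1"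
  shows "monom c 1 \<in> R"
proof -
  have "pcompose (monom c k) [:1, 1:] \<in> R" by (rule comp1[OF assms(1)])
  then have "monom (of_nat k * c) 1 \<in> R" using lemmaA[of _ 1] coeff_shift_monom[of c k] by metis
  then have "[:\<iota> (inverse (of_nat k)):] * monom (of_nat k * c) 1 \<in> R" by (rule scaleR)
  moreover have "(of_nat k :: 'k) \<noteq> 0" using assms(2) by simp
  then have "\<iota> (inverse (of_nat k)) * of_nat k = 1" using hinv[of "of_nat k"] hof_nat by simp
  then have "[:\<iota> (inverse (of_nat k)):] * monom (of_nat k * c) 1 = monom c 1"
    by (simp add: smult_monom mult.assoc[symmetric])
  ultimately show ?thesis by simp
qed

lemma x_all:
  assumes "monom 1 1 \<in> R"
  shows "R = UNIV"
proof -
  have "p \<in> R" for p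
  proof (induction p)
    case 0 then show ?case using subrD(1)[OF subrR] by simp
  next
    case (pCons a p)
    have e: "pCons a p = [:a:] + monom 1 1 * p"
      by (rule poly_eqI) (simp add: coeff_monom_mult coeff_pCons split: nat.split)
    show ?case unfolding e using subrD(3,4)[OF subrR] constR assms pCons.IH by blast
  qed
  then show ?thesis by blast
qed

end



context lndctx
begin

lemma exists_gh:
  assumes "d b \<noteq> 0"
  shows "\<exists>g. d g \<noteq> 0 \<and> d (d g) = 0"
proof -
  obtain k where k: "(d ^^ k) b = 0" using dnil by blast
  show ?thesis using k assms
  proof (induction k arbitrary: b)
    case 0 then show ?case using d0 by simp
  next
    case (Suc k)
    show ?case
    proof (cases "d (d b) = 0")
      case True then show ?thesis using Suc.prems(2) by blast
    next
      case False
      have "(d ^^ k) (d b) = 0" using Suc.prems(1) by (simp only: funpow_Suc_right o_apply)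
      then show ?thesis using Suc.IH False by blast
    qed
  qed
qed

end

locale full = setting \<iota> + lndctx \<iota> d for \<iota> :: "'k::field_char_0 \<Rightarrow> 'b::idom" and d
begin

lemma monomh:
  assumes g1: "d g \<noteq> 0" and g2: "d (d g) = 0"
  shows "monom (d g) n \<in> R"
proof (cases n)
  case 0 then show ?thesis using constR by (simp add: monom_0)
next
  case (Suc m)
  define h where "h = d g"
  define t where "t = (of_nat (Suc m) :: 'k)"
  have t: "t \<noteq> 0" unfolding t_def by (metis of_nat_eq_0_iff nat.distinct(1))
  define a where "a = \<iota> (inverse t) * h"
  define q where "q = [:g:] + monom a (Suc m)"
  have da: "d a = 0" unfolding a_def h_def by (simp add: dmul dc g2)
  have ta: "of_nat (Suc m) * a = h"
  proof -
    have "of_nat (Suc m) * a = \<iota> t * \<iota> (inverse t) * h" unfolding a_def t_def hof_nat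
      by (simp add: mult.assoc)
    also have "\<dots> = h" using hinv[OF t] by (simp add: mult.commute)
    finally show ?thesis .
  qed
  have ta': "(1 + of_nat m) * a = h" using ta by simp
  have pq: "pderiv q = monom h m"
    unfolding q_def by (simp add: pderiv_add pderiv_const' pderiv_monom ta ta')
  have dq: "dm q = [:h:]"
    unfolding q_def by (simp add: dm_add dm_const dm_monom da h_def)
  have mh: "monom 1 m * [:h:] = monom h m"
    by (rule poly_eqI) (simp add: coeff_monom_mult coeff_pCons split: nat.split)
  have "Dn m q = 0" unfolding Dn_def pq dq mh by simp
  then have qR: "q \<in> R" unfolding R_def by (rule HD_mem[OF Dn_LND])
  have "monom a (Suc m) = q - [:g:]" unfolding q_def by simp
  then have "monom a (Suc m) \<in> R" using subr_diff[OF subrR qR constR] by simp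
  then have "[:\<iota> t:] * monom a (Suc m) \<in> R" by (rule scaleR)
  moreover have "[:\<iota> t:] * monom a (Suc m) = monom h (Suc m)"
    using ta unfolding t_def hof_nat by (simp add: smult_monom)
  ultimately show ?thesis unfolding h_def Suc by simp
qed

end

context setting
begin

lemma chain_contra:
  assumes N: "noeth R" and h: "h \<noteq> 0" and hR: "\<And>n. monom h n \<in> R" and RU: "R \<noteq> UNIV"
  shows False
proof -
  define MS where "MS n = (\<lambda>i. monom h i) ` {..<n}" for n
  define J where "J n = lcomb R (MS n)" for n
  have MSfin: "finite (MS n)" for n unfolding MS_def by simp
  have MSR: "MS n \<subseteq> R" for n unfolding MS_def using hR by blast
  have Ji: "idl R (J n)" for n unfolding J_def by (rule lcomb_idl[OF subrR MSR])
  have Jmono: "J m \<subseteq> J n" if "m \<le> n" for m n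
  proof -
    have "MS m \<subseteq> MS n" unfolding MS_def using that by auto
    also have "MS n \<subseteq> J n" unfolding J_def by (rule lcomb_sub[OF subrR MSfin])
    finally show ?thesis unfolding J_def[of m] by (rule lcomb_min[OF Ji])
  qed
  have "\<exists>N. (\<Union>n. J n) \<subseteq> J N" by (rule noeth_chain[of R J, OF N Ji Jmono])
  then obtain M where M: "(\<Union>n. J n) \<subseteq> J M" by (elim exE)
  have "monom h M \<in> J (Suc M)" unfolding J_def MS_def
    by (rule lcomb_gen[OF subrR]) auto
  then have "monom h M \<in> J M" using M by blast
  then obtain c where c: "monom h M = (\<Sum>f\<in>MS M. c f * f)" "\<forall>f\<in>MS M. c f \<in> R"
    unfolding J_def lcomb_def by blast
  have inj: "inj_on (\<lambda>i. monom h i) {..<M}"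
  proof (rule inj_onI)
    fix i j assume "monom h i = monom h j"
    then have "coeff (monom h i) i = coeff (monom h j) i" by simp
    then show "i = j" using h by (simp split: if_splits)
  qed
  define ci where "ci i = coeff (c (monom h i)) (M - i)" for i
  have "monom h M = (\<Sum>i<M. c (monom h i) * monom h i)"
    unfolding c(1) MS_def by (simp add: sum.reindex[OF inj])
  then have "coeff (monom h M) M = (\<Sum>i<M. coeff (c (monom h i) * monom h i) M)"
    by (simp add: coeff_sum)
  also have "\<dots> = (\<Sum>i<M. ci i * h)"
  proof (rule sum.cong)
    fix i assume "i \<in> {..<M}"
    then have "\<not> M < i" by simp
    then show "coeff (c (monom h i) * monom h i) M = ci i * h"
      unfolding ci_def by (simp add: mult.commute[of "c (monom h i)"] coeff_monom_mult mult.commute)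
  qed simp
  finally have "h = (\<Sum>i<M. ci i) * h" by (simp add: sum_distrib_right)
  then have "(1 - (\<Sum>i<M. ci i)) * h = 0" by (simp add: algebra_simps)
  then have s1: "(\<Sum>i<M. ci i) = 1" using h by simp
  have "monom 1 1 = (\<Sum>i<M. monom (ci i) 1)" unfolding s1[symmetric] by (rule monom_sum)
  also have "\<dots> \<in> R"
  proof (rule subr_sum[OF subrR])
    fix i assume i: "i \<in> {..<M}"
    then have "c (monom h i) \<in> R" using c(2) unfolding MS_def by blast
    then have "monom (ci i) (M - i) \<in> R" unfolding ci_def by (rule lemmaA)
    then show "monom (ci i) 1 \<in> R" by (rule lemmaB) (use i in simp)
  qed
  finally have "R = UNIV" by (rule x_all)
  then show False using RU by simp
qed

end

theorem theorem1:
  fixes \<iota> :: "'k::field_char_0 \<Rightarrow> 'b::idom"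
  assumes "alg_closed_field TYPE('k)"
    and "ring_hom_map \<iota>"
    and "fg_algebra \<iota> UNIV"
    and "\<exists>D. is_LND \<iota> D \<and> D \<noteq> (\<lambda>_. 0)"
    and "HD_star (\<lambda>c. [:\<iota> c:]) \<noteq> UNIV"
  shows "\<not> fg_algebra (\<lambda>c. [:\<iota> c:]) (HD_star (\<lambda>c. [:\<iota> c:]))"
proof
  assume fg: "fg_algebra (\<lambda>c. [:\<iota> c:]) (HD_star (\<lambda>c. [:\<iota> c:]))"
  interpret setting \<iota> unfolding setting_def khom_def by (rule assms(2))
  obtain D where D: "is_LND \<iota> D" "D \<noteq> (\<lambda>_. 0)" using assms(4) by blast
  interpret full \<iota> D unfolding full_def lndctx_def lndctx_axioms_def setting_def khom_def
    using assms(2) D(1) by blast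
  obtain b where "D b \<noteq> 0" using D(2) by blast
  then obtain g where g: "D g \<noteq> 0" "D (D g) = 0" using exists_gh by blast
  have kh: "khom (\<lambda>c. [:\<iota> c:])"
    unfolding khom_def ring_hom_map_def by (simp add: h1 hadd hmult)
  obtain G where G: "finite G" "alg_gen (\<lambda>c. [:\<iota> c:]) G = HD_star (\<lambda>c. [:\<iota> c:])"
    using fg unfolding fg_algebra_def by blast
  have "noeth R" unfolding R_def G(2)[symmetric] by (rule khom.noeth_alg_gen[OF kh G(1)])
  moreover have "R \<noteq> UNIV" unfolding R_def by (rule assms(5))
  ultimately show False using chain_contra[of "D g"] g monomh by blast
qed

end
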